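(* Let $A=(a_{ij})$ be a real $n\times n$ matrix with nonnegative entries, $\mathbf 1=(1,\ldots,1)^{\mathrm T}$, $L=\operatorname{diag}(A\mathbf 1)-A$, let $S$ be the orthogonal projection of $\mathbb R^n$ onto $\mathcal R(L)\oplus\operatorname{span}(\mathbf 1)$, and let $\tilde J$ be the eigenprojection of $L$ corresponding to the eigenvalue $0$. Then $S\tilde J S=\tilde J S$ and $\operatorname{rank}(\tilde J S)=1$.
   Context: $\mathcal R(M)$ and $\mathcal N(M)$ denote range and null space of a matrix $M$. The index $\operatorname{ind}M$ is the smallest $k\ge0$ with $\operatorname{rank}M^{k+1}=\operatorname{rank}M^k$. The eigenprojection of $M$ corresponding to the eigenvalue $0$ is the idempotent matrix $Z$ with $\mathcal R(Z)=\mathcal N(M^{\nu})$ and $\mathcal N(Z)=\mathcal R(M^{\nu})$, where $\nu=\operatorname{ind}M$. *)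

theory Defs
  imports "HOL-Analysis.Analysis"
begin

fun mat_pow :: "real^'n^'n \<Rightarrow> nat \<Rightarrow> real^'n^'n" where
  "mat_pow M 0 = mat 1"
| "mat_pow M (Suc k) = M ** mat_pow M k"

definition mat_range :: "real^'n^'m \<Rightarrow> (real^'m) set" where
  "mat_range M = range (\<lambda>x. M *v x)"

definition mat_null :: "real^'n^'m \<Rightarrow> (real^'n) set" where
  "mat_null M = {x. M *v x = 0}"

definition mat_index :: "real^'n^'n \<Rightarrow> nat" where
  "mat_index M = (LEAST k. rank (mat_pow M (Suc k)) = rank (mat_pow M k))"

definition is_eigenprojection0 :: "real^'n^'n \<Rightarrow> real^'n^'n \<Rightarrow> bool" where
  "is_eigenprojection0 M Z \<longleftrightarrow>
     Z ** Z = Z \<and>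
     mat_range Z = mat_null (mat_pow M (mat_index M)) \<and>
     mat_null Z = mat_range (mat_pow M (mat_index M))"

definition is_orth_proj :: "real^'n^'n \<Rightarrow> (real^'n) set \<Rightarrow> bool" where
  "is_orth_proj P V \<longleftrightarrow> subspace V \<and>
     (\<forall>x. P *v x \<in> V \<and> (\<forall>v\<in>V. (x - P *v x) \<bullet> v = 0))"

definition ones :: "real^'n" where
  "ones = vec 1"

definition laplacian :: "real^'n^'n \<Rightarrow> real^'n^'n" where
  "laplacian A = (\<chi> i j. if i = j then (A *v ones) $ i else 0) - A"

end

theory Submission
  imports Defs
begin

lemma sum_ifdelta: "(\<Sum>j\<in>(UNIV::'n::finite set). (if i = j then c else 0) * w j) = (c::real) * w i"
proof -
  have "(\<Sum>j\<in>(UNIV::'n set). (if i = j then c else 0) * w j) = (\<Sum>j\<in>(UNIV::'n set). if i = j then c * w j else 0)"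
    by (rule sum.cong) auto
  then show ?thesis by simp
qed

lemma lap_apply:
  "(laplacian A *v z) $ i = (\<Sum>j\<in>UNIV. A$i$j * (z$i - z$j))"
proof -
  have D: "((\<chi> i j. if i = j then (A *v ones) $ i else 0) *v z) $ i = (\<Sum>j\<in>UNIV. A$i$j) * z$i"
    unfolding ones_def matrix_vector_mult_def
    by (simp add: sum_ifdelta[where w="\<lambda>j. z$j"])
  have "(laplacian A *v z) $ i = (\<Sum>j\<in>UNIV. A$i$j) * z$i - (\<Sum>j\<in>UNIV. A$i$j * z$j)"
    unfolding laplacian_def matrix_vector_mult_diff_rdistrib
    using D by (simp add: matrix_vector_mult_def)
  also have "\<dots> = (\<Sum>j\<in>UNIV. A$i$j * (z$i - z$j))"
    by (simp add: right_diff_distrib sum_subtractf sum_distrib_left mult.commute)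
  finally show ?thesis .
qed

lemma step_bound:
  fixes A :: "real^'n^'n" and z :: "real^'n"
  assumes nonneg: "\<forall>i j. A $ i $ j \<ge> 0"
    and dt: "(\<Sum>j\<in>UNIV. A$i$j) \<le> t" and tpos: "t > 0"
    and zM: "\<forall>j. \<bar>z$j\<bar> \<le> M"
  shows "\<bar>z$i - (\<Sum>j\<in>UNIV. A$i$j * (z$i - z$j)) / t\<bar> \<le> M"
proof -
  define d where "d = (\<Sum>j\<in>UNIV. A$i$j)"
  define s where "s = (\<Sum>j\<in>UNIV. A$i$j * (z$i - z$j))"
  have d0: "d \<ge> 0" unfolding d_def using nonneg by (simp add: sum_nonneg)
  have zi: "\<bar>z$i\<bar> \<le> M" using zM by auto
  have "(\<Sum>j\<in>UNIV. A$i$j * (z$i - M)) \<le> s"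
    unfolding s_def
    by (rule sum_mono, rule mult_left_mono) (use zM nonneg in \<open>auto simp: abs_le_iff\<close>)
  then have s1: "d * (z$i - M) \<le> s" unfolding d_def by (simp add: sum_distrib_right)
  have "d * (z$i - M) \<ge> t * (z$i - M)"
    using dt zi unfolding d_def by (intro mult_right_mono_neg) auto
  with s1 have "t * (z$i - M) \<le> s" by linarith
  then have u: "z$i - M \<le> s / t" using tpos by (simp add: field_simps)
  have "s \<le> (\<Sum>j\<in>UNIV. A$i$j * (z$i + M))"
    unfolding s_def
    by (rule sum_mono, rule mult_left_mono) (use zM nonneg in \<open>auto simp: abs_le_iff\<close>)
  then have s2: "s \<le> d * (z$i + M)" unfolding d_def by (simp add: sum_distrib_right)
  have "d * (z$i + M) \<le> t * (z$i + M)"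
    using dt zi unfolding d_def by (intro mult_right_mono) auto
  with s2 have "s \<le> t * (z$i + M)" by linarith
  then have l: "s / t \<le> z$i + M" using tpos by (simp add: field_simps)
  show ?thesis using u l unfolding s_def by linarith
qed

lemma semisimple:
  fixes A :: "real^'n^'n" and x :: "real^'n"
  assumes nonneg: "\<forall>i j. A $ i $ j \<ge> 0"
    and L2: "laplacian A *v (laplacian A *v x) = 0"
  shows "laplacian A *v x = 0"
proof (rule ccontr)
  define L where "L = laplacian A"
  define y where "y = L *v x"
  assume "laplacian A *v x \<noteq> 0"
  then have "y \<noteq> 0" unfolding y_def L_def .
  then obtain i where yi: "y $ i \<noteq> 0" by (auto simp: vec_eq_iff)
  define t where "t = 1 + (\<Sum>i\<in>UNIV. \<Sum>j\<in>UNIV. A$i$j)"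
  have rs0: "\<And>i. (\<Sum>j\<in>UNIV. A$i$j) \<ge> 0" using nonneg by (simp add: sum_nonneg)
  have dt: "\<And>i. (\<Sum>j\<in>UNIV. A$i$j) \<le> t"
  proof -
    fix i
    have "(\<Sum>j\<in>UNIV. A$i$j) \<le> (\<Sum>i\<in>UNIV. \<Sum>j\<in>UNIV. A$i$j)"
      by (rule member_le_sum) (use rs0 in auto)
    then show "(\<Sum>j\<in>UNIV. A$i$j) \<le> t" unfolding t_def by simp
  qed
  have tpos: "t > 0" unfolding t_def using rs0 by (simp add: sum_nonneg add_pos_nonneg)
  define z where "z k = x - (real k / t) *\<^sub>R y" for k
  have Ly: "L *v y = 0" using L2 unfolding y_def L_def .
  have lin: "linear ((*v) L)" by (rule matrix_vector_mul_linear)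
  have Lz: "L *v z k = y" for k
    unfolding z_def using Ly
    by (simp add: linear_diff[OF lin] linear_scale[OF lin] y_def)
  have step: "z (Suc k) $ j = z k $ j - (\<Sum>l\<in>UNIV. A$j$l * (z k$j - z k$l)) / t" for k j
  proof -
    have "(\<Sum>l\<in>UNIV. A$j$l * (z k$j - z k$l)) = y $ j"
      using Lz[of k] lap_apply[of A "z k" j] unfolding L_def by simp
    then show ?thesis unfolding z_def using tpos by (simp add: field_simps)
  qed
  have bnd: "\<forall>j. \<bar>z k $ j\<bar> \<le> norm x" for k
  proof (induction k)
    case 0
    then show ?case unfolding z_def by (simp add: component_le_norm_cart)
  next
    case (Suc k)
    show ?case using step_bound[OF nonneg dt tpos Suc] step by simp
  qed
  obtain k where k: "2 * t * norm x / \<bar>y$i\<bar> < real k" using reals_Archimedean2 by blast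
  have "\<bar>x$i - (real k / t) * y$i\<bar> \<le> norm x" using bnd[of k] unfolding z_def by simp
  moreover have "\<bar>x$i\<bar> \<le> norm x" by (simp add: component_le_norm_cart)
  moreover have aux: "\<And>a w M::real. \<bar>a - w\<bar> \<le> M \<Longrightarrow> \<bar>a\<bar> \<le> M \<Longrightarrow> \<bar>w\<bar> \<le> 2*M" by arith
  ultimately have "\<bar>(real k / t) * y$i\<bar> \<le> 2 * norm x" by blast
  then have "real k * \<bar>y$i\<bar> / t \<le> 2 * norm x" using tpos by (simp add: abs_mult)
  then have "real k * \<bar>y$i\<bar> \<le> 2 * norm x * t" using tpos by (simp add: field_simps)
  moreover have "2 * t * norm x < real k * \<bar>y$i\<bar>" using k yi by (simp add: field_simps)
  ultimately show False by (simp add: algebra_simps)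
qed

lemma lap_ones: "laplacian A *v ones = 0"
  by (simp add: vec_eq_iff lap_apply ones_def)

lemma ones_nz: "(ones :: real^'n) \<noteq> 0"
  by (simp add: ones_def vec_eq_iff)

lemma rank_sq:
  fixes A :: "real^'n^'n"
  assumes nonneg: "\<forall>i j. A $ i $ j \<ge> 0"
  shows "rank (laplacian A ** laplacian A) = rank (laplacian A)"
proof -
  define L where "L = laplacian A"
  have lin: "linear ((*v) L)" by (rule matrix_vector_mul_linear)
  have r: "range (\<lambda>x. (L ** L) *v x) = (*v) L ` range ((*v) L)"
    by (auto simp: matrix_vector_mul_assoc[symmetric] image_iff)
  have sp: "span (range ((*v) L)) = range ((*v) L)"
    using span_linear_image[OF lin, of UNIV] by simp
  have inj: "inj_on ((*v) L) (span (range ((*v) L)))"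
    unfolding sp
  proof (rule inj_onI)
    fix u v assume "u \<in> range ((*v) L)" "v \<in> range ((*v) L)" and e: "L *v u = L *v v"
    then obtain a b where ab: "u = L *v a" "v = L *v b" by auto
    have "L *v (L *v (a - b)) = 0" using e ab by (simp add: linear_diff[OF lin])
    then have "L *v (a - b) = 0" using semisimple[OF nonneg] unfolding L_def by blast
    then show "u = v" using ab by (simp add: linear_diff[OF lin])
  qed
  have "rank (L ** L) = dim ((*v) L ` range ((*v) L))" by (simp add: rank_dim_range r)
  also have "\<dots> = dim (range ((*v) L))" by (rule dim_image_eq[OF lin inj])
  also have "\<dots> = rank L" by (simp add: rank_dim_range)
  finally show ?thesis unfolding L_def .
qed

lemma index_one:
  fixes A :: "real^'n^'n"
  assumes nonneg: "\<forall>i j. A $ i $ j \<ge> 0"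
  shows "mat_index (laplacian A) = 1"
  unfolding mat_index_def
proof (rule Least_equality)
  show "rank (mat_pow (laplacian A) (Suc 1)) = rank (mat_pow (laplacian A) 1)"
    using rank_sq[OF nonneg] by (simp add: numeral_2_eq_2)
next
  fix y assume h: "rank (mat_pow (laplacian A) (Suc y)) = rank (mat_pow (laplacian A) y)"
  show "1 \<le> y"
  proof (rule ccontr)
    assume "\<not> 1 \<le> y"
    then have "y = 0" by simp
    with h have "rank (laplacian A) = CARD('n)" by (simp add: rank_I)
    then have "inj ((*v) (laplacian A))" by (simp add: full_rank_injective)
    moreover have "laplacian A *v ones = laplacian A *v 0" by (simp add: lap_ones)
    ultimately show False using ones_nz by (metis injD matrix_vector_mult_0_right)
  qed
qed

theorem lemmaA2:
  fixes A S J :: "real^'n^'n"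
  assumes nonneg: "\<forall>i j. A $ i $ j \<ge> 0"
    and S: "is_orth_proj S (mat_range (laplacian A) + span {ones})"
    and J: "is_eigenprojection0 (laplacian A) J"
  shows "S ** J ** S = J ** S \<and> rank (J ** S) = 1"
proof -
  define L where "L = laplacian A"
  define V where "V = mat_range L + span {ones}"
  have mp1: "mat_pow L (mat_index L) = L" unfolding L_def using index_one[OF nonneg] by simp
  have Jsq: "J ** J = J" and rJ: "mat_range J = mat_null L" and nJ: "mat_null J = mat_range L"
    using J mp1 unfolding is_eigenprojection0_def L_def by auto
  have Sp: "subspace V" and SV: "\<And>x. S *v x \<in> V" and So: "\<And>x v. v \<in> V \<Longrightarrow> (x - S *v x) \<bullet> v = 0"
    using S unfolding is_orth_proj_def V_def L_def by auto
  have Jfix: "J *v v = v" if "v \<in> mat_null L" for v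
  proof -
    from that rJ obtain w where "v = J *v w" unfolding mat_range_def by auto
    then show ?thesis by (simp add: matrix_vector_mul_assoc Jsq)
  qed
  have Jones: "J *v ones = ones"
    by (rule Jfix) (simp add: mat_null_def L_def lap_ones)
  have Jkill: "J *v (L *v a) = 0" for a
    using nJ unfolding mat_null_def mat_range_def by auto
  have Sfix: "S *v v = v" if "v \<in> V" for v
  proof -
    have "v - S *v v \<in> V" using Sp that SV by (simp add: subspace_diff)
    then have "(v - S *v v) \<bullet> (v - S *v v) = 0" using So by blast
    then show ?thesis by simp
  qed
  have cV: "c *\<^sub>R ones \<in> V" for c
  proof -
    have "L *v 0 \<in> mat_range L" unfolding mat_range_def by blast
    moreover have "c *\<^sub>R ones \<in> span {ones}" by (simp add: span_base span_scale)
    ultimately have "L *v 0 + c *\<^sub>R ones \<in> V" unfolding V_def by (rule set_plus_intro)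
    then show ?thesis by simp
  qed
  have JS: "\<exists>c. J *v (S *v x) = c *\<^sub>R ones" for x
  proof -
    from SV[of x] obtain r u where ru: "S *v x = r + u" "r \<in> mat_range L" "u \<in> span {ones}"
      unfolding V_def by (auto elim: set_plus_elim)
    from ru(2) obtain a where a: "r = L *v a" unfolding mat_range_def by auto
    from ru(3) obtain c where c: "u = c *\<^sub>R ones" by (auto simp: span_singleton)
    have lin: "linear ((*v) J)" by (rule matrix_vector_mul_linear)
    have "J *v (S *v x) = c *\<^sub>R ones"
      using ru(1) a c by (simp add: linear_add[OF lin] linear_scale[OF lin] Jkill Jones)
    then show ?thesis by blast
  qed
  have eq1: "S ** J ** S = J ** S"
    unfolding matrix_eq
  proof
    fix x
    obtain c where c: "J *v (S *v x) = c *\<^sub>R ones" using JS by blast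
    show "(S ** J ** S) *v x = (J ** S) *v x"
      by (simp add: matrix_vector_mul_assoc[symmetric] c Sfix[OF cV])
  qed
  have rng: "range (\<lambda>x. (J ** S) *v x) = span {ones::real^'n}"
  proof
    show "range (\<lambda>x. (J ** S) *v x) \<subseteq> span {ones::real^'n}"
    proof
      fix v assume "v \<in> range (\<lambda>x. (J ** S) *v x)"
      then obtain x where "v = J *v (S *v x)" by (auto simp: matrix_vector_mul_assoc)
      with JS[of x] show "v \<in> span {ones::real^'n}" by (auto simp: span_base span_scale)
    qed
  next
    show "span {ones::real^'n} \<subseteq> range (\<lambda>x. (J ** S) *v x)"
    proof
      fix v assume "v \<in> span {ones::real^'n}"
      then obtain c where c: "v = c *\<^sub>R ones" by (auto simp: span_singleton)
      have lin: "linear ((*v) J)" by (rule matrix_vector_mul_linear)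
      have "(J ** S) *v v = v"
        using c Sfix[OF cV] by (simp add: matrix_vector_mul_assoc[symmetric] linear_scale[OF lin] Jones)
      then show "v \<in> range (\<lambda>x. (J ** S) *v x)" by (metis rangeI)
    qed
  qed
  have "rank (J ** S) = 1" by (simp add: rank_dim_range rng ones_nz)
  with eq1 show ?thesis by simp
qed

end
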